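(* There are universal constants $C,c>0$ such that the following holds. Let $p\in(0,1/2]$, let $y=(y_1,\dots,y_n)\in\mathbb{R}^n$, and let $L>0$, $\lambda\in\mathbb{R}$ be such that, for independent Bernoulli($p$) random variables $b_1,\dots,b_n$, $\mathbb{P}\{|\sum_{i=1}^nb_iy_i-\lambda|\leq t\}\leq Lt$ for all $t\geq\sqrt n$. Then there exists $y'=(y'_1,\dots,y'_n)\in\mathbb{Z}^n$ such that: (i) $\|y-y'\|_\infty\leq1$; (ii) $\mathbb{P}\{|\sum_{i=1}^nb_iy'_i-\lambda|\leq t\}\leq C\,Lt$ for all $t\geq\sqrt n$; (iii) $\mathcal L(\sum_{i=1}^nb_iy'_i,\sqrt n)\geq c\,\mathcal L(\sum_{i=1}^nb_iy_i,\sqrt n)$; (iv) $|\sum_{i=1}^ny_i-\sum_{i=1}^ny'_i|\leq C\sqrt n$.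
   Context: A Bernoulli($p$) random variable takes value $1$ with probability $p$ and $0$ with probability $1-p$. The Lévy concentration function is $\mathcal L(\xi,t)=\sup_{\lambda\in\mathbb{R}}\mathbb{P}\{|\xi-\lambda|\leq t\}$. *)

theory Defs
  imports "HOL-Probability.Probability"
begin

definition bern_vec :: "nat \<Rightarrow> real \<Rightarrow> (nat \<Rightarrow> bool) pmf" where
  "bern_vec n p = Pi_pmf {..<n} False (\<lambda>_. bernoulli_pmf p)"

definition bsum :: "nat \<Rightarrow> real \<Rightarrow> (nat \<Rightarrow> real) \<Rightarrow> real pmf" where
  "bsum n p y = map_pmf (\<lambda>b. \<Sum>i<n. of_bool (b i) * y i) (bern_vec n p)"

definition levy_conc :: "real pmf \<Rightarrow> real \<Rightarrow> real" where
  "levy_conc M t = (SUP lam. measure_pmf.prob M {x. \<bar>x - lam\<bar> \<le> t})"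

end

theory Submission
  imports Defs
begin


lemma fin_Pi_pmf:
  fixes q :: "'a \<Rightarrow> 'b::finite pmf"
  assumes "finite A"
  shows "finite (set_pmf (Pi_pmf A d q))"
proof -
  have "{f. \<forall>x. x \<notin> A \<longrightarrow> f x = d} = PiE_dflt A d (\<lambda>_. UNIV)"
    by (auto simp: PiE_dflt_def)
  moreover have "finite (PiE_dflt A d (\<lambda>_. (UNIV::'b set)))"
    using assms by (intro finite_PiE_dflt) auto
  ultimately show ?thesis using set_Pi_pmf_subset[OF assms, of d q]
    by (metis finite_subset)
qed

lemma E_sum:
  assumes "finite (set_pmf M)"
  shows "measure_pmf.expectation M f = (\<Sum>a\<in>set_pmf M. f a * pmf M a)"
  by (rule integral_measure_pmf_real) (auto simp: assms)

lemma E_swap: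
  fixes f :: "'a \<Rightarrow> 'b \<Rightarrow> real"
  assumes "finite (set_pmf M)" "finite (set_pmf N)"
  shows "measure_pmf.expectation M (\<lambda>a. measure_pmf.expectation N (\<lambda>b. f a b)) =
         measure_pmf.expectation N (\<lambda>b. measure_pmf.expectation M (\<lambda>a. f a b))"
proof -
  have "measure_pmf.expectation M (\<lambda>a. measure_pmf.expectation N (\<lambda>b. f a b)) =
     (\<Sum>a\<in>set_pmf M. \<Sum>b\<in>set_pmf N. f a b * pmf N b * pmf M a)"
    using assms by (simp add: E_sum sum_distrib_right)
  also have "\<dots> = (\<Sum>b\<in>set_pmf N. \<Sum>a\<in>set_pmf M. f a b * pmf M a * pmf N b)"
    by (subst sum.swap) (simp add: mult_ac)
  also have "\<dots> = measure_pmf.expectation N (\<lambda>b. measure_pmf.expectation M (\<lambda>a. f a b))"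
    using assms by (simp add: E_sum sum_distrib_right)
  finally show ?thesis .
qed

lemma E_pair:
  fixes h :: "'a \<times> 'b \<Rightarrow> real"
  assumes "finite (set_pmf M)" "finite (set_pmf N)"
  shows "measure_pmf.expectation (pair_pmf M N) h =
         measure_pmf.expectation M (\<lambda>a. measure_pmf.expectation N (\<lambda>b. h (a,b)))"
proof -
  have "measure_pmf.expectation (pair_pmf M N) h =
     (\<Sum>z\<in>set_pmf M \<times> set_pmf N. h z * pmf (pair_pmf M N) z)"
    using assms by (simp add: E_sum)
  also have "\<dots> = (\<Sum>a\<in>set_pmf M. \<Sum>b\<in>set_pmf N. h (a,b) * pmf N b * pmf M a)"
  proof -
    have "(\<Sum>z\<in>set_pmf M \<times> set_pmf N. h z * pmf (pair_pmf M N) z) =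
          (\<Sum>z\<in>set_pmf M \<times> set_pmf N. h z * (pmf M (fst z) * pmf N (snd z)))"
      by (intro sum.cong) (auto simp: pmf_pair)
    then show ?thesis by (simp add: sum.cartesian_product mult_ac case_prod_beta)
  qed
  also have "\<dots> = measure_pmf.expectation M (\<lambda>a. measure_pmf.expectation N (\<lambda>b. h (a,b)))"
    using assms by (simp add: E_sum sum_distrib_right)
  finally show ?thesis .
qed

lemma prob_E: "measure_pmf.prob M A = measure_pmf.expectation M (indicator A)"
  by simp

lemma markov:
  fixes Z :: "'a \<Rightarrow> real"
  assumes "finite (set_pmf M)" "\<And>x. Z x \<ge> 0"
  shows "a * measure_pmf.prob M {x. Z x \<ge> a} \<le> measure_pmf.expectation M Z"
proof -
  have "a * measure_pmf.prob M {x. Z x \<ge> a} =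
        measure_pmf.expectation M (\<lambda>x. a * indicator {x. Z x \<ge> a} x)"
    by simp
  also have "\<dots> \<le> measure_pmf.expectation M Z"
    by (rule integral_mono) (auto intro: integrable_measure_pmf_finite assms split: split_indicator)
  finally show ?thesis .
qed

lemma E_sq_expand:
  fixes v :: "'a \<Rightarrow> real"
  assumes "finite (set_pmf N)"
  shows "measure_pmf.expectation N (\<lambda>b. (u + v b)^2) =
     u^2 + 2 * u * measure_pmf.expectation N v + measure_pmf.expectation N (\<lambda>b. (v b)^2)"
proof -
  have "(\<lambda>b. (u + v b)^2) = (\<lambda>b. u^2 + (2 * u * v b + (v b)^2))"
    by (auto simp: power2_sum)
  then show ?thesis
    using assms by (simp add: integrable_measure_pmf_finite)
qed

lemma E_lin:
  fixes v :: "'a \<Rightarrow> real"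
  assumes "finite (set_pmf N)"
  shows "measure_pmf.expectation N (\<lambda>b. u + v b) = u + measure_pmf.expectation N v"
  using assms by (simp add: integrable_measure_pmf_finite)

lemma second_moment:
  fixes g :: "'a \<Rightarrow> bool \<Rightarrow> real"
  assumes "finite A"
    and "\<And>i. i \<in> A \<Longrightarrow> measure_pmf.expectation (q i) (g i) = 0"
    and "\<And>i x. i \<in> A \<Longrightarrow> \<bar>g i x\<bar> \<le> 1"
  shows "measure_pmf.expectation (Pi_pmf A d q) (\<lambda>r. \<Sum>i\<in>A. g i (r i)) = 0 \<and>
         measure_pmf.expectation (Pi_pmf A d q) (\<lambda>r. (\<Sum>i\<in>A. g i (r i))^2) \<le> real (card A)"
  using assms
proof (induction A rule: finite_induct)
  case empty
  then show ?case by simp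
next
  case (insert x A)
  let ?T = "\<lambda>f. \<Sum>i\<in>A. g i (f i)"
  let ?P = "Pi_pmf A d q"
  have IH: "measure_pmf.expectation ?P ?T = 0" "measure_pmf.expectation ?P (\<lambda>f. (?T f)^2) \<le> real (card A)"
    using insert by auto
  have fin: "finite (set_pmf ?P)" by (rule fin_Pi_pmf) (rule insert.hyps)
  have finb: "finite (set_pmf (q x))" by simp
  have eq: "(\<lambda>z. (\<Sum>i\<in>insert x A. g i (((snd z)(x:=fst z)) i))) = (\<lambda>z. g x (fst z) + ?T (snd z))"
    using insert.hyps by (auto simp: fun_eq_iff intro!: sum.cong)
  have eq2: "(\<lambda>z. (\<Sum>i\<in>insert x A. g i (((snd z)(x:=fst z)) i))^2) = (\<lambda>z. (g x (fst z) + ?T (snd z))^2)"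
    using eq by (metis (no_types, lifting))
  have gx: "measure_pmf.expectation (q x) (g x) = 0" using insert by auto
  have g1: "\<And>y. (g x y)^2 \<le> 1" using insert.prems(2)[of x] 
    by (metis abs_le_square_iff abs_one insertI1 one_power2)
  have PI: "\<And>F::('a\<Rightarrow>bool)\<Rightarrow>real. measure_pmf.expectation (Pi_pmf (insert x A) d q) F
     = measure_pmf.expectation (pair_pmf (q x) ?P) (\<lambda>z. F ((snd z)(x:=fst z)))"
    by (simp add: Pi_pmf_insert insert.hyps case_prod_beta)
  have "measure_pmf.expectation (Pi_pmf (insert x A) d q) (\<lambda>r. \<Sum>i\<in>insert x A. g i (r i))
     = measure_pmf.expectation (q x) (\<lambda>y. measure_pmf.expectation ?P (\<lambda>f. g x y + ?T f))"
    unfolding PI eq by (simp add: E_pair fin finb)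
  also have "\<dots> = 0" using IH gx by (simp add: E_lin fin)
  finally have A1: "measure_pmf.expectation (Pi_pmf (insert x A) d q) (\<lambda>r. \<Sum>i\<in>insert x A. g i (r i)) = 0" .
  have "measure_pmf.expectation (Pi_pmf (insert x A) d q) (\<lambda>r. (\<Sum>i\<in>insert x A. g i (r i))^2)
     = measure_pmf.expectation (q x) (\<lambda>y. measure_pmf.expectation ?P (\<lambda>f. (g x y + ?T f)^2))"
    unfolding PI eq2 by (simp add: E_pair fin finb)
  also have "\<dots> = measure_pmf.expectation (q x) (\<lambda>y. (g x y)^2 + measure_pmf.expectation ?P (\<lambda>f. (?T f)^2))"
    using IH by (simp add: E_sq_expand fin)
  also have "\<dots> \<le> measure_pmf.expectation (q x) (\<lambda>y. 1 + real (card A))"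
    using IH g1 by (intro integral_mono) (auto intro: integrable_measure_pmf_finite add_mono)
  also have "\<dots> = real (card (insert x A))" using insert.hyps by simp
  finally show ?case using A1 by simp
qed



lemma prob_of_bool: "measure_pmf.prob M {x. P x} = measure_pmf.expectation M (\<lambda>x. of_bool (P x))"
  unfolding prob_E indicator_def by simp

lemma pmf_subadd: "measure_pmf.prob M (A \<union> B) \<le> measure_pmf.prob M A + measure_pmf.prob M B"
  by (rule measure_subadditive) (auto simp: measure_pmf.emeasure_finite)

lemma exists_good:
  assumes "measure_pmf.prob M B < 1"
  shows "\<exists>x\<in>set_pmf M. x \<notin> B"
proof -
  have "measure_pmf.prob M (UNIV - B) = 1 - measure_pmf.prob M B"
    by (subst measure_pmf.prob_compl[symmetric]) auto
  then have "measure_pmf.prob M (UNIV - B) \<noteq> 0" using assms by simp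
  then show ?thesis using measure_pmf_zero_iff by blast
qed

lemma layer:
  fixes s X :: real
  assumes "s > 0" "0 \<le> X" "X \<le> 2^(N+1) * s"
  shows "s^2 / (max s (X/2))^2 \<le> (\<Sum>k\<le>N. 4 / 4^k * of_bool (X \<le> 2^(k+1) * s))"
  using assms(3)
proof (induction N)
  case 0
  have "s^2 / (max s (X/2))^2 \<le> 1"
    using assms(1) by (simp add: power_mono)
  then show ?case using 0 by simp
next
  case (Suc N)
  have nn: "0 \<le> (4::real) / 4^(Suc N) * of_bool (X \<le> 2^(Suc N+1) * s)" by simp
  show ?case
  proof (cases "X \<le> 2^(N+1) * s")
    case True
    then have "s^2 / (max s (X/2))^2 \<le> (\<Sum>k\<le>N. 4 / 4^k * of_bool (X \<le> 2^(k+1) * s))"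
      using Suc.IH by blast
    then show ?thesis using nn by (simp only: sum.atMost_Suc)
  next
    case False
    then have X: "X/2 > 2^N * s" by simp
    have "2^N * s \<ge> s" using assms(1) by simp
    then have mx: "max s (X/2) = X/2" using X by simp
    have pos: "0 < 2^N * s" using assms(1) by simp
    have "s^2 / (X/2)^2 \<le> s^2 / ((2::real)^N * s)^2"
      using X pos by (intro divide_left_mono power_mono mult_pos_pos) auto
    also have "\<dots> = 4 / 4^(Suc N)"
    proof -
      have e: "(4::real)^N = ((2::real)^N)^2"
        by (metis power_mult power_mult_distrib mult.commute numeral_Bit0 power2_eq_square
                  numeral_times_numeral num_double power_even_eq)
      show ?thesis using assms(1) by (simp add: power_mult_distrib e)
    qed
    finally have "s^2 / (max s (X/2))^2 \<le> 4 / 4^(Suc N) * of_bool (X \<le> 2^(Suc N+1) * s)"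
      using mx Suc.prems by simp
    moreover have "0 \<le> (\<Sum>k\<le>N. (4::real) / 4^k * of_bool (X \<le> 2^(k+1) * s))"
      by (intro sum_nonneg) simp
    ultimately show ?thesis by simp
  qed
qed

lemma geom_half: "(\<Sum>k\<le>N. (1/2::real)^k) \<le> 2"
proof -
  have "(\<Sum>k\<le>N. (1/2::real)^k) = 2 - (1/2)^N"
    by (induction N) (auto simp: field_simps)
  then show ?thesis by simp
qed

lemma levy_upper:
  "measure_pmf.prob M {x. \<bar>x - mu\<bar> \<le> t} \<le> levy_conc M t"
  unfolding levy_conc_def
  by (rule cSUP_upper) (auto intro!: bdd_aboveI[of _ 1])

lemma levy_pos:
  assumes "t \<ge> 0"
  shows "levy_conc M t > 0"
proof -
  obtain x0 where x0: "x0 \<in> set_pmf M" using set_pmf_not_empty[of M] by blast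
  have "0 < measure_pmf.prob M {x. \<bar>x - x0\<bar> \<le> t}"
    using x0 assms by (intro measure_pmf_posI[of x0]) auto
  also have "\<dots> \<le> levy_conc M t" by (rule levy_upper)
  finally show ?thesis .
qed

lemma levy_near:
  assumes "t \<ge> 0"
  shows "\<exists>mu. measure_pmf.prob M {x. \<bar>x - mu\<bar> \<le> t} > levy_conc M t / 2"
proof -
  have "levy_conc M t / 2 < levy_conc M t" using levy_pos[OF assms, of M] by simp
  then show ?thesis unfolding levy_conc_def
    by (subst (asm) less_cSUP_iff) (auto intro!: bdd_aboveI[of _ 1])
qed



lemma main_pos:
  fixes n :: nat and p :: real and y :: "nat \<Rightarrow> real" and L lam :: real
  assumes n: "n > 0" and p: "0 < p" "p \<le> 1/2" and L: "L > 0"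
    and hyp: "\<forall>t\<ge>sqrt (real n). measure_pmf.prob (bsum n p y) {x. \<bar>x - lam\<bar> \<le> t} \<le> L * t"
  shows "\<exists>y'::nat \<Rightarrow> int.
          (\<forall>i<n. \<bar>y i - real_of_int (y' i)\<bar> \<le> 1) \<and>
          (\<forall>t\<ge>sqrt (real n).
             measure_pmf.prob (bsum n p (\<lambda>i. real_of_int (y' i))) {x. \<bar>x - lam\<bar> \<le> t} \<le> 66 * L * t) \<and>
          levy_conc (bsum n p (\<lambda>i. real_of_int (y' i))) (sqrt (real n))
            \<ge> 1/12 * levy_conc (bsum n p y) (sqrt (real n)) \<and>
          \<bar>(\<Sum>i<n. y i) - (\<Sum>i<n. real_of_int (y' i))\<bar> \<le> 66 * sqrt (real n)"
proof -
  define s where "s = sqrt (real n)"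
  have s: "s > 0" using n by (simp add: s_def)
  have s2: "s^2 = real n" by (simp add: s_def)
  define Mb where "Mb = bern_vec n p"
  define fr where "fr i = frac (y i)" for i
  have fr: "0 \<le> fr i" "fr i \<le> 1" for i
    using frac_lt_1[of "y i"] by (auto simp: fr_def less_imp_le)
  define Mr where "Mr = Pi_pmf {..<n} False (\<lambda>i. bernoulli_pmf (fr i))"
  define S where "S b = (\<Sum>i<n. of_bool (b i) * y i)" for b :: "nat \<Rightarrow> bool"
  define D where "D b r = (\<Sum>i<n. of_bool (b i) * (of_bool (r i) - fr i))" for b r :: "nat \<Rightarrow> bool"
  define yp where "yp r i = \<lfloor>y i\<rfloor> + of_bool (r i)" for r :: "nat \<Rightarrow> bool" and i
  define X where "X b = \<bar>S b - lam\<bar>" for b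
  have finb: "finite (set_pmf Mb)" unfolding Mb_def bern_vec_def by (rule fin_Pi_pmf) simp
  have finr: "finite (set_pmf Mr)" unfolding Mr_def by (rule fin_Pi_pmf) simp
  have prob_bsum: "measure_pmf.prob (bsum n p z) {x. \<bar>x - mu\<bar> \<le> t} =
      measure_pmf.prob Mb {b. \<bar>(\<Sum>i<n. of_bool (b i) * z i) - mu\<bar> \<le> t}" for z mu t
    by (simp add: bsum_def Mb_def vimage_def)
  have Sp: "(\<Sum>i<n. of_bool (b i) * real_of_int (yp r i)) = S b + D b r" for b r
    unfolding S_def D_def sum.distrib[symmetric]
    by (intro sum.cong) (auto simp: yp_def fr_def frac_def algebra_simps)
  have hypb: "measure_pmf.prob Mb {b. X b \<le> t} \<le> L * t" if "t \<ge> s" for t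
  proof -
    have "measure_pmf.prob (bsum n p y) {x. \<bar>x - lam\<bar> \<le> t} \<le> L * t"
      using hyp that by (simp add: s_def)
    then show ?thesis unfolding prob_bsum X_def S_def .
  qed

  have sm: "measure_pmf.expectation Mr (\<lambda>r. (\<Sum>i\<in>{..<n}. g i (r i))^2) \<le> real n"
    if g0: "\<And>i. measure_pmf.expectation (bernoulli_pmf (fr i)) (g i) = 0"
       and g1: "\<And>i x. \<bar>g i x\<bar> \<le> 1" for g
    using second_moment[of "{..<n}" "\<lambda>i. bernoulli_pmf (fr i)" g False] g0 g1
    unfolding Mr_def by simp
  have ED: "measure_pmf.expectation Mr (\<lambda>r. (D b r)^2) \<le> real n" for b
  proof -
    have "measure_pmf.expectation Mr (\<lambda>r. (\<Sum>i\<in>{..<n}. (\<lambda>i x. of_bool (b i) * (of_bool x - fr i)) i (r i))^2) \<le> real n"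
      by (rule sm) (use fr in \<open>auto simp: algebra_simps\<close>)
    then show ?thesis by (simp add: D_def)
  qed
  have cheb: "measure_pmf.prob Mr {r. \<bar>D b r\<bar> \<ge> m} \<le> real n / m^2" if m: "m > 0" for b m
  proof -
    have "m^2 * measure_pmf.prob Mr {r. (D b r)^2 \<ge> m^2} \<le> measure_pmf.expectation Mr (\<lambda>r. (D b r)^2)"
      by (rule markov[OF finr]) simp
    also have "\<dots> \<le> real n" by (rule ED)
    finally have a: "m^2 * measure_pmf.prob Mr {r. (D b r)^2 \<ge> m^2} \<le> real n" .
    have "{r. \<bar>D b r\<bar> \<ge> m} = {r. (D b r)^2 \<ge> m^2}"
      using m by (auto simp: abs_le_square_iff[symmetric])
    then show ?thesis using a m by (simp add: field_simps)
  qed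
  define Q where "Q r = measure_pmf.prob Mb {b. X b \<le> 2 * \<bar>D b r\<bar> \<and> \<bar>D b r\<bar> > s}" for r
  define B where "B = (\<Sum>i<n. \<bar>y i\<bar>) + \<bar>lam\<bar>"
  have XB: "X b \<le> B" for b
  proof -
    have "\<bar>S b\<bar> \<le> (\<Sum>i<n. \<bar>of_bool (b i) * y i\<bar>)" unfolding S_def by (rule sum_abs)
    also have "\<dots> \<le> (\<Sum>i<n. \<bar>y i\<bar>)" by (intro sum_mono) auto
    finally show ?thesis unfolding X_def B_def by linarith
  qed
  obtain N where N: "B / s < 2^N" using real_arch_pow[of 2 "B/s"] by auto
  have XN: "X b \<le> 2^(N+1) * s" for b
  proof -
    have "X b \<le> 2^N * s" using XB[of b] N s by (simp add: field_simps)
    also have "\<dots> \<le> 2^(N+1) * s" using s by simp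
    finally show ?thesis .
  qed
  have EQ: "measure_pmf.expectation Mr Q \<le> 16 * L * s"
  proof -
    have "measure_pmf.expectation Mr Q =
      measure_pmf.expectation Mb (\<lambda>b. measure_pmf.prob Mr {r. X b \<le> 2 * \<bar>D b r\<bar> \<and> \<bar>D b r\<bar> > s})"
      unfolding Q_def prob_of_bool by (rule E_swap[OF finr finb])
    also have "\<dots> \<le> measure_pmf.expectation Mb (\<lambda>b. s^2 / (max s (X b / 2))^2)"
    proof (rule integral_mono)
      fix b
      have "measure_pmf.prob Mr {r. X b \<le> 2 * \<bar>D b r\<bar> \<and> \<bar>D b r\<bar> > s}
          \<le> measure_pmf.prob Mr {r. \<bar>D b r\<bar> \<ge> max s (X b / 2)}"
        by (intro measure_pmf.finite_measure_mono) auto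
      also have "\<dots> \<le> real n / (max s (X b / 2))^2" using s by (intro cheb) simp
      finally show "measure_pmf.prob Mr {r. X b \<le> 2 * \<bar>D b r\<bar> \<and> \<bar>D b r\<bar> > s}
          \<le> s^2 / (max s (X b / 2))^2" using s2 by simp
    qed (auto intro: integrable_measure_pmf_finite finb)
    also have "\<dots> \<le> measure_pmf.expectation Mb (\<lambda>b. \<Sum>k\<le>N. 4 / 4^k * of_bool (X b \<le> 2^(k+1) * s))"
    proof (rule integral_mono)
      fix b
      show "s^2 / (max s (X b / 2))^2 \<le> (\<Sum>k\<le>N. 4 / 4^k * of_bool (X b \<le> 2^(k+1) * s))"
        by (rule layer[OF s _ XN]) (simp add: X_def)
    qed (auto intro: integrable_measure_pmf_finite finb)
    also have "\<dots> = (\<Sum>k\<le>N. 4 / 4^k * measure_pmf.prob Mb {b. X b \<le> 2^(k+1) * s})"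
      by (simp add: integrable_measure_pmf_finite finb prob_of_bool)
    also have "\<dots> \<le> (\<Sum>k\<le>N. 4 / 4^k * (L * (2^(k+1) * s)))"
    proof (intro sum_mono mult_left_mono)
      fix k :: nat
      have "(1::real) \<le> 2^(k+1)" by (rule one_le_power) simp
      then have "s \<le> 2^(k+1) * s" using s by simp
      then show "measure_pmf.prob Mb {b. X b \<le> 2^(k+1) * s} \<le> L * (2^(k+1) * s)"
        by (rule hypb)
    qed simp
    also have "\<dots> = 8 * L * s * (\<Sum>k\<le>N. (1/2)^k)"
    proof -
      have "4 / 4^k * (L * (2^(k+1) * s)) = 8 * L * s * (1/2)^k" for k :: nat
      proof -
        have "(4::real)^k = 2^k * 2^k" by (simp add: power_mult_distrib[symmetric])
        then show ?thesis by (simp add: power_divide field_simps)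
      qed
      then show ?thesis by (simp add: sum_distrib_left)
    qed
    also have "\<dots> \<le> 8 * L * s * 2"
      using L s geom_half[of N] by (intro mult_left_mono) auto
    finally show ?thesis by simp
  qed
  define Bad2 where "Bad2 = {r. Q r \<ge> 64 * L * s}"
  have P2: "measure_pmf.prob Mr Bad2 \<le> 1/4"
  proof -
    have "(64 * L * s) * measure_pmf.prob Mr Bad2 \<le> measure_pmf.expectation Mr Q"
      unfolding Bad2_def by (rule markov[OF finr]) (simp add: Q_def)
    then have "(64 * L * s) * measure_pmf.prob Mr Bad2 \<le> (64 * L * s) * (1/4)" using EQ by simp
    then show ?thesis using L s by (simp add: mult_le_cancel_left_pos)
  qed
  define U where "U r = (\<Sum>i<n. (of_bool (r i) - fr i))" for r :: "nat \<Rightarrow> bool"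
  define Bad4 where "Bad4 = {r. (U r)^2 \<ge> 16 * real n}"
  have P4: "measure_pmf.prob Mr Bad4 \<le> 1/16"
  proof -
    have EU: "measure_pmf.expectation Mr (\<lambda>r. (U r)^2) \<le> real n"
    proof -
      have "measure_pmf.expectation Mr (\<lambda>r. (\<Sum>i\<in>{..<n}. (\<lambda>i x. of_bool x - fr i) i (r i))^2) \<le> real n"
        by (rule sm) (use fr in \<open>auto simp: algebra_simps\<close>)
      then show ?thesis by (simp add: U_def)
    qed
    have "(16 * real n) * measure_pmf.prob Mr Bad4 \<le> measure_pmf.expectation Mr (\<lambda>r. (U r)^2)"
      unfolding Bad4_def by (rule markov[OF finr]) simp
    then have "(16 * real n) * measure_pmf.prob Mr Bad4 \<le> (16 * real n) * (1/16)" using EU by simp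
    then show ?thesis using n by (simp add: mult_le_cancel_left_pos)
  qed
  define Lc where "Lc = levy_conc (bsum n p y) s"
  obtain lam0 where lam0: "measure_pmf.prob (bsum n p y) {x. \<bar>x - lam0\<bar> \<le> s} > Lc / 2"
    using levy_near[of s "bsum n p y"] s unfolding Lc_def by auto
  define A where "A = measure_pmf.prob Mb {b. \<bar>S b - lam0\<bar> \<le> s}"
  have A: "A > Lc / 2" using lam0 unfolding A_def prob_bsum S_def .
  have Lc0: "Lc > 0" unfolding Lc_def using s by (intro levy_pos) simp
  define Z3 where "Z3 r = measure_pmf.prob Mb {b. \<bar>S b - lam0\<bar> \<le> s \<and> \<bar>D b r\<bar> > 2 * s}" for r
  define Bad3 where "Bad3 = {r. Z3 r \<ge> A / 2}"
  have P3: "measure_pmf.prob Mr Bad3 \<le> 1/2"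
  proof -
    have "measure_pmf.expectation Mr Z3 =
      measure_pmf.expectation Mb (\<lambda>b. measure_pmf.prob Mr {r. \<bar>S b - lam0\<bar> \<le> s \<and> \<bar>D b r\<bar> > 2 * s})"
      unfolding Z3_def prob_of_bool by (rule E_swap[OF finr finb])
    also have "\<dots> \<le> measure_pmf.expectation Mb (\<lambda>b. of_bool (\<bar>S b - lam0\<bar> \<le> s) * (1/4))"
    proof (rule integral_mono)
      fix b
      show "measure_pmf.prob Mr {r. \<bar>S b - lam0\<bar> \<le> s \<and> \<bar>D b r\<bar> > 2 * s}
            \<le> of_bool (\<bar>S b - lam0\<bar> \<le> s) * (1/4)"
      proof (cases "\<bar>S b - lam0\<bar> \<le> s")
        case True
        have "measure_pmf.prob Mr {r. \<bar>S b - lam0\<bar> \<le> s \<and> \<bar>D b r\<bar> > 2 * s}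
            \<le> measure_pmf.prob Mr {r. \<bar>D b r\<bar> \<ge> 2 * s}"
          by (intro measure_pmf.finite_measure_mono) auto
        also have "\<dots> \<le> real n / (2 * s)^2" using s by (intro cheb) simp
        also have "\<dots> = 1/4" using s s2[symmetric] by (simp add: power_mult_distrib)
        finally show ?thesis using True by simp
      qed simp
    qed (auto intro: integrable_measure_pmf_finite finb)
    also have "\<dots> = A / 4" unfolding A_def prob_of_bool by simp
    finally have EZ: "measure_pmf.expectation Mr Z3 \<le> A / 4" .
    have "(A/2) * measure_pmf.prob Mr Bad3 \<le> measure_pmf.expectation Mr Z3"
      unfolding Bad3_def by (rule markov[OF finr]) (simp add: Z3_def)
    then have "(A/2) * measure_pmf.prob Mr Bad3 \<le> (A/2) * (1/2)" using EZ by simp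
    moreover have "A > 0" using A Lc0 by simp
    ultimately show ?thesis by (simp add: mult_le_cancel_left_pos)
  qed
  have "measure_pmf.prob Mr (Bad2 \<union> Bad3 \<union> Bad4) \<le>
        measure_pmf.prob Mr (Bad2 \<union> Bad3) + measure_pmf.prob Mr Bad4"
    by (rule pmf_subadd)
  also have "\<dots> \<le> measure_pmf.prob Mr Bad2 + measure_pmf.prob Mr Bad3 + measure_pmf.prob Mr Bad4"
    using pmf_subadd[of Mr Bad2 Bad3] by simp
  also have "\<dots> < 1" using P2 P3 P4 by simp
  finally obtain r where r: "r \<notin> Bad2 \<union> Bad3 \<union> Bad4"
    using exists_good by blast
  have Qr: "Q r < 64 * L * s" and Z3r: "Z3 r < A / 2" and Ur: "(U r)^2 < 16 * real n"
    using r by (auto simp: Bad2_def Bad3_def Bad4_def)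
  have probp: "measure_pmf.prob (bsum n p (\<lambda>i. real_of_int (yp r i))) {x. \<bar>x - mu\<bar> \<le> t} =
      measure_pmf.prob Mb {b. \<bar>S b + D b r - mu\<bar> \<le> t}" for mu t
    unfolding prob_bsum Sp ..
  show ?thesis
  proof (intro exI[of _ "yp r"] conjI allI impI)
    fix i assume "i < n"
    show "\<bar>y i - real_of_int (yp r i)\<bar> \<le> 1"
      using fr[of i] frac_lt_1[of "y i"] by (auto simp: yp_def fr_def frac_def)
  next
    fix t assume t: "sqrt (real n) \<le> t"
    then have ts: "s \<le> t" by (simp add: s_def)
    have "{b. \<bar>S b + D b r - lam\<bar> \<le> t} \<subseteq>
          {b. X b \<le> 2 * t} \<union> {b. X b \<le> 2 * \<bar>D b r\<bar> \<and> \<bar>D b r\<bar> > s}"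
      using ts by (auto simp: X_def)
    then have "measure_pmf.prob Mb {b. \<bar>S b + D b r - lam\<bar> \<le> t} \<le>
       measure_pmf.prob Mb ({b. X b \<le> 2 * t} \<union> {b. X b \<le> 2 * \<bar>D b r\<bar> \<and> \<bar>D b r\<bar> > s})"
      by (intro measure_pmf.finite_measure_mono) auto
    also have "\<dots> \<le> measure_pmf.prob Mb {b. X b \<le> 2 * t} + Q r"
      unfolding Q_def by (rule pmf_subadd)
    also have "\<dots> \<le> L * (2 * t) + 64 * L * s"
      using Qr hypb[of "2 * t"] ts s by simp
    also have "\<dots> \<le> 66 * L * t" using ts L by (simp add: mult_left_mono)
    finally show "measure_pmf.prob (bsum n p (\<lambda>i. real_of_int (yp r i))) {x. \<bar>x - lam\<bar> \<le> t} \<le> 66 * L * t"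
      unfolding probp .
  next
    let ?M = "bsum n p (\<lambda>i. real_of_int (yp r i))"
    have "A \<le> measure_pmf.prob Mb {b. \<bar>S b - lam0\<bar> \<le> s \<and> \<bar>D b r\<bar> \<le> 2 * s} + Z3 r"
      unfolding A_def Z3_def
      by (rule order.trans[OF _ pmf_subadd])
         (auto intro!: measure_pmf.finite_measure_mono)
    also have "measure_pmf.prob Mb {b. \<bar>S b - lam0\<bar> \<le> s \<and> \<bar>D b r\<bar> \<le> 2 * s}
       \<le> measure_pmf.prob Mb {b. \<bar>S b + D b r - lam0\<bar> \<le> 3 * s}"
      by (intro measure_pmf.finite_measure_mono) auto
    also have "\<dots> = measure_pmf.prob ?M {x. \<bar>x - lam0\<bar> \<le> 3 * s}" unfolding probp ..
    also have "\<dots> \<le> measure_pmf.prob ?M ({x. \<bar>x - (lam0 - 2 * s)\<bar> \<le> s} \<union> {x. \<bar>x - lam0\<bar> \<le> s}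
                     \<union> {x. \<bar>x - (lam0 + 2 * s)\<bar> \<le> s})"
      by (intro measure_pmf.finite_measure_mono) auto
    also have "\<dots> \<le> measure_pmf.prob ?M {x. \<bar>x - (lam0 - 2 * s)\<bar> \<le> s} + measure_pmf.prob ?M {x. \<bar>x - lam0\<bar> \<le> s}
                     + measure_pmf.prob ?M {x. \<bar>x - (lam0 + 2 * s)\<bar> \<le> s}"
      using pmf_subadd[of ?M "{x. \<bar>x - (lam0 - 2 * s)\<bar> \<le> s} \<union> {x. \<bar>x - lam0\<bar> \<le> s}"
               "{x. \<bar>x - (lam0 + 2 * s)\<bar> \<le> s}"]
            pmf_subadd[of ?M "{x. \<bar>x - (lam0 - 2 * s)\<bar> \<le> s}" "{x. \<bar>x - lam0\<bar> \<le> s}"]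
      by simp
    also have "\<dots> \<le> 3 * levy_conc ?M s"
      using levy_upper[of ?M "lam0 - 2 * s" s] levy_upper[of ?M lam0 s] levy_upper[of ?M "lam0 + 2 * s" s]
      by simp
    finally have "A \<le> 3 * levy_conc ?M s + Z3 r" by simp
    then show "1/12 * levy_conc (bsum n p y) (sqrt (real n)) \<le> levy_conc ?M (sqrt (real n))"
      using A Z3r unfolding Lc_def s_def by simp
  next
    have "(\<Sum>i<n. y i) - (\<Sum>i<n. real_of_int (yp r i)) = - U r"
    proof -
      have "(\<Sum>i<n. y i) - (\<Sum>i<n. real_of_int (yp r i)) = (\<Sum>i<n. y i - real_of_int (yp r i))"
        by (simp add: sum_subtractf)
      also have "\<dots> = (\<Sum>i<n. - (of_bool (r i) - fr i))"
        by (intro sum.cong) (auto simp: yp_def fr_def frac_def)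
      also have "\<dots> = - U r" unfolding U_def sum_negf by simp
      finally show ?thesis .
    qed
    moreover have "\<bar>U r\<bar> \<le> 4 * s"
    proof (rule ccontr)
      assume "\<not> \<bar>U r\<bar> \<le> 4 * s"
      then have "(4 * s)^2 \<le> \<bar>U r\<bar>^2" using s by (intro power_mono) auto
      then show False using Ur s2 by (simp add: power_mult_distrib)
    qed
    ultimately show "\<bar>(\<Sum>i<n. y i) - (\<Sum>i<n. real_of_int (yp r i))\<bar> \<le> 66 * sqrt (real n)"
      using s unfolding s_def by simp
  qed
qed


lemma main_zero:
  fixes n :: nat and p :: real and y :: "nat \<Rightarrow> real" and L lam :: real
  assumes n: "n = 0" and L: "L > 0"
    and hyp: "\<forall>t\<ge>sqrt (real n). measure_pmf.prob (bsum n p y) {x. \<bar>x - lam\<bar> \<le> t} \<le> L * t"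
  shows "\<exists>y'::nat \<Rightarrow> int.
          (\<forall>i<n. \<bar>y i - real_of_int (y' i)\<bar> \<le> 1) \<and>
          (\<forall>t\<ge>sqrt (real n).
             measure_pmf.prob (bsum n p (\<lambda>i. real_of_int (y' i))) {x. \<bar>x - lam\<bar> \<le> t} \<le> 66 * L * t) \<and>
          levy_conc (bsum n p (\<lambda>i. real_of_int (y' i))) (sqrt (real n))
            \<ge> 1/12 * levy_conc (bsum n p y) (sqrt (real n)) \<and>
          \<bar>(\<Sum>i<n. y i) - (\<Sum>i<n. real_of_int (y' i))\<bar> \<le> 66 * sqrt (real n)"
proof -
  define z :: "nat \<Rightarrow> int" where "z = (\<lambda>_. 0)"
  have eq: "bsum n p (\<lambda>i. real_of_int (z i)) = bsum n p y"
    using n by (simp add: bsum_def)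
  have lv: "levy_conc (bsum n p y) 0 \<ge> 0"
    using levy_pos[of 0 "bsum n p y"] by simp
  have A: "\<forall>t\<ge>sqrt (real n).
             measure_pmf.prob (bsum n p (\<lambda>i. real_of_int (z i))) {x. \<bar>x - lam\<bar> \<le> t} \<le> 66 * L * t"
  proof (intro allI impI)
    fix t assume t: "sqrt (real n) \<le> t"
    then have "t \<ge> 0" using n by simp
    then have "L * t \<le> 66 * L * t" using L by (simp add: mult_right_mono)
    moreover have "measure_pmf.prob (bsum n p y) {x. \<bar>x - lam\<bar> \<le> t} \<le> L * t" using hyp t by blast
    ultimately show "measure_pmf.prob (bsum n p (\<lambda>i. real_of_int (z i))) {x. \<bar>x - lam\<bar> \<le> t} \<le> 66 * L * t"
      unfolding eq by linarith
  qed
  have B: "levy_conc (bsum n p (\<lambda>i. real_of_int (z i))) (sqrt (real n))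
            \<ge> 1/12 * levy_conc (bsum n p y) (sqrt (real n))"
    unfolding eq using n lv by simp
  have C: "\<bar>(\<Sum>i<n. y i) - (\<Sum>i<n. real_of_int (z i))\<bar> \<le> 66 * sqrt (real n)"
    using n by simp
  show ?thesis using A B C n by blast
qed

theorem lemma5p2:
  shows "\<exists>C c :: real. C > 0 \<and> c > 0 \<and>
    (\<forall>(n::nat) (p::real) (y::nat \<Rightarrow> real) (L::real) (lam::real).
       0 < p \<and> p \<le> 1/2 \<and> L > 0 \<and>
       (\<forall>t\<ge>sqrt (real n). measure_pmf.prob (bsum n p y) {x. \<bar>x - lam\<bar> \<le> t} \<le> L * t)
       \<longrightarrow>
       (\<exists>y'::nat \<Rightarrow> int.
          (\<forall>i<n. \<bar>y i - real_of_int (y' i)\<bar> \<le> 1) \<and>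
          (\<forall>t\<ge>sqrt (real n).
             measure_pmf.prob (bsum n p (\<lambda>i. real_of_int (y' i))) {x. \<bar>x - lam\<bar> \<le> t} \<le> C * L * t) \<and>
          levy_conc (bsum n p (\<lambda>i. real_of_int (y' i))) (sqrt (real n))
            \<ge> c * levy_conc (bsum n p y) (sqrt (real n)) \<and>
          \<bar>(\<Sum>i<n. y i) - (\<Sum>i<n. real_of_int (y' i))\<bar> \<le> C * sqrt (real n)))"
proof (rule exI[of _ "66::real"], rule exI[of _ "1/12::real"], intro conjI allI impI)
  fix n :: nat and p :: real and y :: "nat \<Rightarrow> real" and L lam :: real
  assume H: "0 < p \<and> p \<le> 1/2 \<and> L > 0 \<and>
       (\<forall>t\<ge>sqrt (real n). measure_pmf.prob (bsum n p y) {x. \<bar>x - lam\<bar> \<le> t} \<le> L * t)"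
  show "\<exists>y'::nat \<Rightarrow> int.
          (\<forall>i<n. \<bar>y i - real_of_int (y' i)\<bar> \<le> 1) \<and>
          (\<forall>t\<ge>sqrt (real n).
             measure_pmf.prob (bsum n p (\<lambda>i. real_of_int (y' i))) {x. \<bar>x - lam\<bar> \<le> t} \<le> 66 * L * t) \<and>
          levy_conc (bsum n p (\<lambda>i. real_of_int (y' i))) (sqrt (real n))
            \<ge> 1/12 * levy_conc (bsum n p y) (sqrt (real n)) \<and>
          \<bar>(\<Sum>i<n. y i) - (\<Sum>i<n. real_of_int (y' i))\<bar> \<le> 66 * sqrt (real n)"
  proof (cases "n = 0")
    case False
    show ?thesis by (rule main_pos[of n p L y lam]) (use False H in auto)
  next
    case True
    show ?thesis by (rule main_zero) (use True H in auto)
  qed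
qed simp_all


end
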